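(* Let $G$ and $G'$ be graphs on the same vertex set $V$ such that $G'$ is obtained from $G$ by a single swap, i.e. there are distinct vertices $a,b,c,d$ with $ab,cd\in E(G)$, $ac,bd\notin E(G)$, and $E(G')=(E(G)\setminus\{ab,cd\})\cup\{ac,bd\}$. Then $|\mu(G)-\mu(G')|\le 1$.
   Context: All graphs are finite and simple. For a graph $G=(V,E)$ on $n$ vertices, a fractional vertex cover is a function $f:V\to[0,\infty)$ with $f(u)+f(v)\ge 1$ for every edge $uv\in E$; $\tau^*(G)$ denotes the minimum of $\sum_{v\in V}f(v)$ over all fractional vertex covers. For $E'\subseteq E$ let $G-E'=(V,E\setminus E')$. Define $\mu(G)=\min\{|E'| : E'\subseteq E,\ \tau^*(G-E')<n/2\}$. *)

theory Defs
  imports Complex_Main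
begin

definition simple_graph :: "'a set \<Rightarrow> 'a set set \<Rightarrow> bool" where
  "simple_graph V E \<longleftrightarrow> finite V \<and> (\<forall>e\<in>E. e \<subseteq> V \<and> card e = 2)"

definition frac_vertex_cover :: "'a set \<Rightarrow> 'a set set \<Rightarrow> ('a \<Rightarrow> real) \<Rightarrow> bool" where
  "frac_vertex_cover V E f \<longleftrightarrow>
     (\<forall>v\<in>V. f v \<ge> 0) \<and> (\<forall>u v. {u, v} \<in> E \<longrightarrow> f u + f v \<ge> 1)"

definition tau_star :: "'a set \<Rightarrow> 'a set set \<Rightarrow> real" where
  "tau_star V E = Inf {(\<Sum>v\<in>V. f v) | f. frac_vertex_cover V E f}"

definition mu :: "'a set \<Rightarrow> 'a set set \<Rightarrow> nat" where
  "mu V E = (LEAST k. \<exists>E'. E' \<subseteq> E \<and> card E' = k \<and> tau_star V (E - E') < real (card V) / 2)"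

end

theory Submission
  imports Defs
begin

lemma tau_lt_D:
  assumes "tau_star V E < x"
  shows "\<exists>f. frac_vertex_cover V E f \<and> sum f V < x"
proof -
  let ?S = "{(\<Sum>v\<in>V. f v) | f. frac_vertex_cover V E f}"
  have ne: "?S \<noteq> {}"
    by (rule ccontr) (auto simp: frac_vertex_cover_def dest: spec[of _ "\<lambda>_. 1"])
  have bd: "bdd_below ?S"
    unfolding bdd_below_def frac_vertex_cover_def
    by (rule exI[of _ 0]) (auto intro: sum_nonneg)
  have "Inf ?S < x" using assms by (simp add: tau_star_def)
  then obtain s where "s \<in> ?S" "s < x" using cInf_less_iff[OF ne bd] by blast
  then show ?thesis by blast
qed

lemma tau_lt_I:
  assumes "frac_vertex_cover V E f" "sum f V < x"
  shows "tau_star V E < x"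
proof -
  let ?S = "{(\<Sum>v\<in>V. f v) | f. frac_vertex_cover V E f}"
  have bd: "bdd_below ?S"
    unfolding bdd_below_def frac_vertex_cover_def
    by (rule exI[of _ 0]) (auto intro: sum_nonneg)
  have "Inf ?S \<le> sum f V" using assms(1) by (intro cInf_lower[OF _ bd]) auto
  then show ?thesis using assms(2) by (simp add: tau_star_def)
qed

lemma fvc_mono: "frac_vertex_cover V E f \<Longrightarrow> F \<subseteq> E \<Longrightarrow> frac_vertex_cover V F f"
  unfolding frac_vertex_cover_def by blast

lemma mu_wit:
  assumes "finite V" "V \<noteq> {}"
  shows "\<exists>E'. E' \<subseteq> E \<and> card E' = mu V E \<and> tau_star V (E - E') < real (card V) / 2"
proof -
  have "frac_vertex_cover V {} (\<lambda>_. 0)" by (simp add: frac_vertex_cover_def)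
  moreover have "(0::real) < real (card V) / 2" using assms by (simp add: card_gt_0_iff)
  ultimately have "tau_star V {} < real (card V) / 2"
    by (intro tau_lt_I[of V "{}" "\<lambda>_. 0"]) auto
  then have "tau_star V (E - E) < real (card V) / 2" by simp
  then have "\<exists>k E'. E' \<subseteq> E \<and> card E' = k \<and> tau_star V (E - E') < real (card V) / 2" by blast
  then show ?thesis unfolding mu_def by (rule LeastI_ex[where P="\<lambda>k. \<exists>E'. E' \<subseteq> E \<and> card E' = k \<and> tau_star V (E - E') < real (card V) / 2"])
qed

lemma mu_le:
  assumes "E' \<subseteq> E" "tau_star V (E - E') < real (card V) / 2"
  shows "mu V E \<le> card E'"
  unfolding mu_def using assms by (intro Least_le) blast

lemma mu_swap_le:
  assumes fin: "finite V" "V \<noteq> {}" "finite E"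
    and dist: "distinct [a, b, c, d]"
    and ab: "{a, b} \<in> E" and cd: "{c, d} \<in> E"
    and E2: "E2 = (E - {{a, b}, {c, d}}) \<union> {{a, c}, {b, d}}"
  shows "mu V E2 \<le> mu V E + 1"
proof -
  obtain E' where E': "E' \<subseteq> E" "card E' = mu V E" "tau_star V (E - E') < real (card V) / 2"
    using mu_wit[OF fin(1,2)] by blast
  obtain f where f: "frac_vertex_cover V (E - E') f" "sum f V < real (card V) / 2"
    using tau_lt_D[OF E'(3)] by blast
  have finE': "finite E'" using E'(1) fin(3) finite_subset by blast
  have n1: "{a,b} \<noteq> {a,c}" "{a,b} \<noteq> {b,d}" "{c,d} \<noteq> {a,c}" "{c,d} \<noteq> {b,d}"
    using dist by (auto simp: doubleton_eq_iff)
  have neq: "{a,b} \<notin> E2" "{c,d} \<notin> E2" unfolding E2 using n1 by blast+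
  show ?thesis
  proof (cases "{a,b} \<in> E' \<or> {c,d} \<in> E'")
    case True
    let ?E = "(E' \<inter> E2) \<union> {{a, c}, {b, d}}"
    have s: "?E \<subseteq> E2" using E2 by auto
    have "E2 - ?E \<subseteq> E - E'" using E2 by auto
    then have "frac_vertex_cover V (E2 - ?E) f" using fvc_mono f(1) by blast
    then have "mu V E2 \<le> card ?E" using mu_le[OF s] tau_lt_I f(2) by blast
    also have "card ?E \<le> card (E' \<inter> E2) + 2"
      by (rule order_trans[OF card_Un_le]) (simp add: card_insert_if)
    also have "card (E' \<inter> E2) + 1 \<le> card E'"
    proof -
      obtain x where x: "x \<in> E'" "x \<notin> E2" using True neq by blast
      have "E' \<inter> E2 \<subseteq> E' - {x}" using x by auto
      then have "card (E' \<inter> E2) \<le> card (E' - {x})" using finE' by (intro card_mono) auto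
      then show ?thesis using x finE' card_Diff1_less[OF finE' x(1)] by linarith
    qed
    ultimately show ?thesis using E'(2) by linarith
  next
    case False
    then have "{a,b} \<in> E - E'" "{c,d} \<in> E - E'" using ab cd by auto
    then have "f a + f b \<ge> 1" "f c + f d \<ge> 1" using f(1) unfolding frac_vertex_cover_def by auto
    have cov: "\<forall>u v. {u,v} = {p,q} \<longrightarrow> 1 \<le> f u + f v" if "1 \<le> f p + f q" for p q
    proof (intro allI impI)
      fix u v assume "{u,v} = {p,q}"
      then have "(u = p \<and> v = q) \<or> (u = q \<and> v = p)" by (simp add: doubleton_eq_iff)
      then show "1 \<le> f u + f v" using that by auto
    qed
    obtain x y where xy: "(x = {a,c} \<and> y = {b,d}) \<or> (x = {b,d} \<and> y = {a,c})"
        "\<forall>u v. {u,v} = y \<longrightarrow> f u + f v \<ge> 1"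
    proof (cases "f a + f c \<ge> 1")
      case True
      then show ?thesis using that[of "{b,d}" "{a,c}"] cov by blast
    next
      case False
      then have "f b + f d \<ge> 1" using \<open>f a + f b \<ge> 1\<close> \<open>f c + f d \<ge> 1\<close> by linarith
      then show ?thesis using that[of "{a,c}" "{b,d}"] cov by blast
    qed
    let ?E = "(E' \<inter> E2) \<union> {x}"
    have s: "?E \<subseteq> E2" using E2 xy(1) by auto
    have sub: "E2 - ?E \<subseteq> (E - E') \<union> {y}" using E2 xy(1) by auto
    have "frac_vertex_cover V (E2 - ?E) f"
      unfolding frac_vertex_cover_def
    proof (intro conjI allI impI)
      show "\<forall>v\<in>V. 0 \<le> f v" using f(1) by (simp add: frac_vertex_cover_def)
    next
      fix u v assume "{u, v} \<in> E2 - ?E"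
      then have "{u,v} \<in> E - E' \<or> {u,v} = y" using sub by blast
      then show "1 \<le> f u + f v" using f(1) xy(2) unfolding frac_vertex_cover_def by blast
    qed
    then have "mu V E2 \<le> card ?E" using mu_le[OF s] tau_lt_I f(2) by blast
    also have "card ?E \<le> card (E' \<inter> E2) + 1"
      by (rule order_trans[OF card_Un_le]) simp
    also have "card (E' \<inter> E2) \<le> card E'" using finE' by (intro card_mono) auto
    finally show ?thesis using E'(2) by linarith
  qed
qed

theorem lemma12:
  fixes V :: "'a set" and E E2 :: "'a set set" and a b c d :: 'a
  assumes "simple_graph V E"
    and "a \<in> V" "b \<in> V" "c \<in> V" "d \<in> V"
    and "distinct [a, b, c, d]"
    and "{a, b} \<in> E" "{c, d} \<in> E" "{a, c} \<notin> E" "{b, d} \<notin> E"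
    and "E2 = (E - {{a, b}, {c, d}}) \<union> {{a, c}, {b, d}}"
  shows "\<bar>int (mu V E) - int (mu V E2)\<bar> \<le> 1"
proof -
  have finV: "finite V" using assms(1) by (simp add: simple_graph_def)
  have ne: "V \<noteq> {}" using assms(2) by blast
  have "E \<subseteq> Pow V" using assms(1) by (auto simp: simple_graph_def)
  then have finE: "finite E" using finite_subset finV by (metis finite_Pow_iff)
  have finE2: "finite E2" using finE assms(11) by simp
  have 1: "mu V E2 \<le> mu V E + 1"
    using mu_swap_le[OF finV ne finE assms(6,7,8,11)] .
  have n1: "{a,b} \<noteq> {a,c}" "{a,b} \<noteq> {b,d}" "{c,d} \<noteq> {a,c}" "{c,d} \<noteq> {b,d}"
    using assms(6) by (auto simp: doubleton_eq_iff)
  have e: "E = (E2 - {{a, c}, {b, d}}) \<union> {{a, b}, {c, d}}"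
    unfolding assms(11) using n1 assms(7-10) by blast
  have d2: "distinct [a, c, b, d]" using assms(6) by auto
  have "{a,c} \<in> E2" "{b,d} \<in> E2" using assms(11) by auto
  then have 2: "mu V E \<le> mu V E2 + 1"
    by (rule mu_swap_le[OF finV ne finE2 d2 _ _ e])
  show ?thesis using 1 2 by linarith
qed

end
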